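(* Let $v\in\mathcal{K}\setminus\mathcal{Y}_{\mu_1}$ and $w\in C_v^+\cap\mathcal{K}$ with $w\ne v$. Then $f_0$ decreases along the segment from $w$ to $v$: the function $t\mapsto f_0(w+t(v-w))$ is strictly decreasing on $[0,1]$.
   Context: $\mathcal{K}\subset\mathbb{R}^q$ is an open, bounded, convex set with $0\in\mathcal{K}$. $f:\mathcal{K}\to\mathbb{R}$ is $C^2$ with $D^2f\ge -MI_q$ ($M\ge0$) and $f(v)\to\infty$ as $v\to\partial\mathcal{K}$, $v\in\mathcal{K}$; set $f_0(v)=f(v)+\frac M2|v|^2$ (convex on $\mathcal{K}$). Let $g:\mathbb{S}^{q-1}\to(0,\infty)$ be the Lipschitz function such that $\nu\mapsto g(\nu)\nu$ parametrizes $\partial\mathcal{K}$. Define $G(x)=g(x/|x|)x$ for $x\ne0$, $G(0)=0$, on $\overline{B_1(0)}$, and $\mathcal{Y}_\mu=G(B_\mu(0))$ for $0<\mu<1$. Fix $r_0>0$ and $0<\mu_0<1$ with $\overline{B_{r_0}(0)}\subset\mathcal{Y}_{\mu_0}$. Let $s_0=\max\{f_0(v):v\in\partial B_{r_0}(0)\}$ and fix $\mu_1\in(\mu_0,1)$ such that $f_0(v)\ge 1+s_0$ for all $v\in\mathcal{K}\setminus\mathcal{Y}_{\mu_1}$. Cones: for $v\in\mathcal{K}\setminus\overline{B_{r_0}(0)}$, $C_v^-$ is the closed (solid) half-cone with vertex $v$, axis the ray from $v$ through $0$, and half-aperture $\alpha(v)\in(0,\pi/2)$ with $\sin\alpha(v)=r_0/|v|$;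 $C_v^+=\{v+\xi:\ v-\xi\in C_v^-\}$ is its reflection through $v$. *)

theory Defs
  imports "HOL-Analysis.Analysis"
begin

definition f0 :: "('a::euclidean_space \<Rightarrow> real) \<Rightarrow> real \<Rightarrow> 'a \<Rightarrow> real" where
  "f0 f M v = f v + M / 2 * (norm v)\<^sup>2"

definition GG :: "('a::euclidean_space \<Rightarrow> real) \<Rightarrow> 'a \<Rightarrow> 'a" where
  "GG g x = (if x = 0 then 0 else g (x /\<^sub>R norm x) *\<^sub>R x)"

definition YY :: "('a::euclidean_space \<Rightarrow> real) \<Rightarrow> real \<Rightarrow> 'a set" where
  "YY g \<mu> = GG g ` ball 0 \<mu>"

definition cone_alpha :: "real \<Rightarrow> 'a::euclidean_space \<Rightarrow> real" where
  "cone_alpha r0 v = arcsin (r0 / norm v)"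

text \<open>C_v^-: closed solid half-cone with vertex v, axis the ray from v through 0,
  half-aperture alpha(v): the points x whose direction x - v makes angle at most alpha(v)
  with -v (the vertex itself included).\<close>
definition cone_minus :: "real \<Rightarrow> 'a::euclidean_space \<Rightarrow> 'a set" where
  "cone_minus r0 v = {x. (x - v) \<bullet> (- v) \<ge> norm (x - v) * norm v * cos (cone_alpha r0 v)}"

definition cone_plus :: "real \<Rightarrow> 'a::euclidean_space \<Rightarrow> 'a set" where
  "cone_plus r0 v = {v + \<xi> | \<xi>. v - \<xi> \<in> cone_minus r0 v}"

end

theory Submission
  imports Defs
begin

theorem corollary2p5:
  fixes K :: "'a::euclidean_space set"
    and f :: "'a \<Rightarrow> real"
    and Df :: "'a \<Rightarrow> 'a \<Rightarrow>\<^sub>L real"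
    and D2f :: "'a \<Rightarrow> 'a \<Rightarrow>\<^sub>L ('a \<Rightarrow>\<^sub>L real)"
    and M r0 \<mu>0 \<mu>1 :: real
    and g :: "'a \<Rightarrow> real"
    and v w :: 'a
  assumes K_open: "open K" and K_bounded: "bounded K" and K_convex: "convex K"
    and K_0: "0 \<in> K"
    and f_D1: "\<And>x. x \<in> K \<Longrightarrow> (f has_derivative blinfun_apply (Df x)) (at x)"
    and f_D2: "\<And>x. x \<in> K \<Longrightarrow> (Df has_derivative blinfun_apply (D2f x)) (at x)"
    and f_D2_cont: "continuous_on K D2f"
    and M_nonneg: "M \<ge> 0"
    and hess_lb: "\<And>x h. x \<in> K \<Longrightarrow> D2f x h h \<ge> - M * (norm h)\<^sup>2"
    and f_blowup: "\<And>y. y \<in> frontier K \<Longrightarrow> filterlim f at_top (at y within K)"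
    and g_pos: "\<And>\<nu>. \<nu> \<in> sphere 0 1 \<Longrightarrow> g \<nu> > 0"
    and g_lip: "\<exists>L. L-lipschitz_on (sphere 0 1) g"
    and g_param: "bij_betw (\<lambda>\<nu>. g \<nu> *\<^sub>R \<nu>) (sphere 0 1) (frontier K)"
    and r0_pos: "r0 > 0" and \<mu>0_bounds: "0 < \<mu>0" "\<mu>0 < 1"
    and r0_\<mu>0: "cball 0 r0 \<subseteq> YY g \<mu>0"
    and \<mu>1_bounds: "\<mu>0 < \<mu>1" "\<mu>1 < 1"
    and \<mu>1_prop: "\<And>u. u \<in> K - YY g \<mu>1 \<Longrightarrow>
                    f0 f M u \<ge> 1 + Sup (f0 f M ` sphere 0 r0)"
    and v_in: "v \<in> K - YY g \<mu>1"
    and w_in: "w \<in> cone_plus r0 v \<inter> K"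
    and w_ne: "w \<noteq> v"
  shows "\<forall>s\<in>{0..1}. \<forall>t\<in>{0..1}. s < t \<longrightarrow>
           f0 f M (w + t *\<^sub>R (v - w)) < f0 f M (w + s *\<^sub>R (v - w))"
proof -
  have YK: "YY g \<mu>0 \<subseteq> K"
  proof
    fix y assume "y \<in> YY g \<mu>0"
    then obtain x where x: "x \<in> ball 0 \<mu>0" "y = GG g x" unfolding YY_def by auto
    show "y \<in> K"
    proof (cases "x = 0")
      case True then show ?thesis using x K_0 by (simp add: GG_def)
    next
      case False
      let ?q = "g (x /\<^sub>R norm x) *\<^sub>R (x /\<^sub>R norm x)"
      have "x /\<^sub>R norm x \<in> sphere 0 1" using False by simp
      then have "?q \<in> frontier K" using bij_betwE[OF g_param] by blast
      then have qc: "?q \<in> closure K" by (simp add: frontier_def)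
      have nx: "norm x < 1" using x \<mu>0_bounds by simp
      have "?q - (1 - norm x) *\<^sub>R (?q - 0) \<in> interior K"
        by (rule mem_interior_closure_convex_shrink[OF K_convex _ qc])
           (use K_open K_0 nx False in \<open>auto simp: interior_open\<close>)
      moreover have "?q - (1 - norm x) *\<^sub>R (?q - 0) = y"
        using x(2) False by (simp add: GG_def algebra_simps)
      ultimately show ?thesis using K_open interior_open by auto
    qed
  qed
  have cbK: "cball 0 r0 \<subseteq> K" using r0_\<mu>0 YK by auto
  have "YY g \<mu>0 \<subseteq> YY g \<mu>1" unfolding YY_def using \<mu>1_bounds by auto
  then have vout: "norm v > r0" using v_in r0_\<mu>0 by (force simp: not_le[symmetric])
  define u where "u = v - w"
  have u0: "u \<noteq> 0" using w_ne by (simp add: u_def)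
  have wK: "w \<in> K" using w_in by simp
  have vK: "v \<in> K" using v_in by simp
  have "v + u \<in> cone_minus r0 v"
    using w_in unfolding cone_plus_def u_def by (auto simp: algebra_simps)
  then have cm: "u \<bullet> (- v) \<ge> norm u * norm v * cos (arcsin (r0 / norm v))"
    by (simp add: cone_minus_def cone_alpha_def)
  define c where "c = cos (arcsin (r0 / norm v))"
  have nvpos: "norm v > 0" using vout r0_pos by linarith
  have rv: "0 < r0 / norm v" "r0 / norm v < 1"
    using vout r0_pos nvpos by (auto simp: divide_less_eq)
  have "(r0/norm v)^2 \<le> 1" using rv by (simp add: power_le_one)
  then have c: "c \<ge> 0" "c^2 = 1 - (r0/norm v)^2"
    using rv by (auto simp: c_def cos_arcsin)
  define a where "a = - (u \<bullet> v)"
  define n where "n = (norm u)^2"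
  have npos: "n > 0" using u0 by (simp add: n_def)
  have a1: "a \<ge> norm u * norm v * c" using cm by (simp add: a_def c_def)
  have "norm u * norm v * c \<ge> 0" using c by simp
  have apos: "a \<ge> 0" using a1 c by (metis mult_nonneg_nonneg norm_ge_zero order_trans)
  have cv: "c^2 * (norm v)^2 = (norm v)^2 - r0^2"
    using c(2) nvpos by (simp add: field_simps power_divide)
  have "(norm u * norm v * c)^2 = (norm u)^2 * (c^2 * (norm v)^2)"
    by (simp add: power_mult_distrib)
  then have "(norm u * norm v * c)^2 = n * ((norm v)^2 - r0^2)"
    using cv by (simp add: n_def)
  then have a2: "a^2 \<ge> n * ((norm v)^2 - r0^2)"
    using a1 \<open>norm u * norm v * c \<ge> 0\<close> by (metis power_mono)
  have nexp: "\<And>t. (norm (v + t *\<^sub>R u))^2 = (norm v)^2 - 2 * t * a + t^2 * n"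
    unfolding power2_norm_eq_inner a_def n_def
    by (simp add: inner_add_left inner_add_right inner_commute algebra_simps power2_eq_square)
  define ls where "ls = a / n"
  have "(norm (v + ls *\<^sub>R u))^2 = (norm v)^2 - a^2/n"
  proof -
    have "ls^2 * n = a^2/n" "2 * ls * a = 2 * (a^2/n)"
      using npos by (simp_all add: ls_def power2_eq_square)
    then show ?thesis unfolding nexp by linarith
  qed
  also have "\<dots> \<le> r0^2"
  proof -
    have "(norm v)^2 - r0^2 \<le> a^2/n" using a2 npos by (simp add: pos_le_divide_eq mult.commute)
    then show ?thesis by linarith
  qed
  finally have sq: "(norm (v + ls *\<^sub>R u))^2 \<le> r0^2" .
  have nls: "norm (v + ls *\<^sub>R u) \<le> r0"
    by (rule power2_le_imp_le[OF sq]) (use r0_pos in linarith)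
  have ls0: "0 \<le> ls" using apos npos by (simp add: ls_def)
  have ic: "\<forall>t. 0 \<le> t \<and> t \<le> ls \<longrightarrow> isCont (\<lambda>t. norm (v + t *\<^sub>R u)) t"
    by (intro allI impI continuous_intros)
  have "\<exists>t. 0 \<le> t \<and> t \<le> ls \<and> norm (v + t *\<^sub>R u) = r0"
    by (rule IVT2[of "\<lambda>t. norm (v + t *\<^sub>R u)" ls r0 0, OF nls _ ls0 ic]) (use vout in simp)
  then obtain lam where lam: "0 \<le> lam" "lam \<le> ls" "norm (v + lam *\<^sub>R u) = r0"
    by blast
  have lampos: "lam > 0" using lam vout by (cases "lam = 0") auto
  define p where "p = v + lam *\<^sub>R u"
  have pK: "p \<in> K" using lam cbK by (auto simp: p_def)
  have psph: "p \<in> sphere 0 r0" using lam by (simp add: p_def)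
  have f0cont: "continuous_on K (f0 f M)"
  proof -
    have "continuous_on K f"
      using f_D1 by (meson continuous_at_imp_continuous_on has_derivative_continuous)
    then show ?thesis unfolding f0_def by (intro continuous_intros)
  qed
  have "compact (f0 f M ` sphere 0 r0)"
    by (rule compact_continuous_image[OF continuous_on_subset[OF f0cont]])
       (use cbK in auto)
  then have "bdd_above (f0 f M ` sphere 0 r0)" by (simp add: bounded_imp_bdd_above compact_imp_bounded)
  then have fp: "f0 f M p \<le> Sup (f0 f M ` sphere 0 r0)" using psph by (simp add: cSup_upper)
  have fv: "f0 f M v \<ge> 1 + Sup (f0 f M ` sphere 0 r0)" using \<mu>1_prop v_in by simp
  define L where "L = 1 + lam"
  have Lpos: "L > 1" using lampos by (simp add: L_def)
  have pw: "p = w + L *\<^sub>R u" by (simp add: p_def L_def u_def algebra_simps)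
  define x where "x = (\<lambda>t::real. w + t *\<^sub>R u)"
  have xK: "x t \<in> K" if "0 \<le> t" "t \<le> L" for t
  proof -
    have "(1 - t/L) *\<^sub>R w + (t/L) *\<^sub>R p \<in> K"
      by (rule convexD[OF K_convex wK pK]) (use that Lpos in auto)
    moreover have "(1 - t/L) *\<^sub>R w + (t/L) *\<^sub>R p = x t"
      using Lpos by (simp add: pw x_def algebra_simps)
    ultimately show ?thesis by simp
  qed
  define A where "A = (norm w)^2"
  define B where "B = w \<bullet> u"
  have nx: "\<And>t. (norm (x t))^2 = A + 2 * t * B + t^2 * n"
    unfolding power2_norm_eq_inner A_def B_def n_def x_def
    by (simp add: inner_add_left inner_add_right inner_commute algebra_simps power2_eq_square)
  define \<phi> where "\<phi> = (\<lambda>t. f0 f M (x t))"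
  have phi: "\<phi> = (\<lambda>t. f (x t) + M/2 * (A + 2 * t * B + t^2 * n))"
    by (simp add: \<phi>_def f0_def nx)
  define \<phi>' where "\<phi>' = (\<lambda>t. Df (x t) u + M * (B + t * n))"
  define \<phi>'' where "\<phi>'' = (\<lambda>t. D2f (x t) u u + M * n)"
  have xd: "(x has_derivative (\<lambda>h. h *\<^sub>R u)) (at t)" for t
    unfolding x_def by (auto intro!: derivative_eq_intros)
  have d1: "(\<phi> has_real_derivative \<phi>' t) (at t)" if "0 \<le> t" "t \<le> L" for t
  proof -
    have "((\<lambda>t. f (x t)) has_derivative (\<lambda>h. Df (x t) (h *\<^sub>R u))) (at t)"
      by (rule has_derivative_compose[OF xd f_D1[OF xK[OF that]]])
    then have "((\<lambda>t. f (x t)) has_derivative (\<lambda>h. h * Df (x t) u)) (at t)"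
      by (simp add: blinfun.scaleR_right)
    moreover have "(\<lambda>h. h * Df (x t) u) = (*) (Df (x t) u)" by (rule ext) (simp add: mult.commute)
    ultimately have "((\<lambda>t. f (x t)) has_real_derivative Df (x t) u) (at t)"
      by (simp add: has_field_derivative_def)
    then show ?thesis unfolding phi \<phi>'_def
      by (auto intro!: derivative_eq_intros simp: algebra_simps power2_eq_square)
  qed
  have d2: "(\<phi>' has_real_derivative \<phi>'' t) (at t)" if "0 \<le> t" "t \<le> L" for t
  proof -
    have "((\<lambda>t. Df (x t)) has_derivative (\<lambda>h. D2f (x t) (h *\<^sub>R u))) (at t)"
      by (rule has_derivative_compose[OF xd f_D2[OF xK[OF that]]])
    then have "((\<lambda>t. blinfun_apply (Df (x t)) u) has_derivative (\<lambda>h. blinfun_apply (D2f (x t) (h *\<^sub>R u)) u)) (at t)"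
      by (rule bounded_linear.has_derivative[OF blinfun.bounded_linear_left])
    then have "((\<lambda>t. Df (x t) u) has_derivative (\<lambda>h. h * D2f (x t) u u)) (at t)"
      by (simp add: blinfun.scaleR_right blinfun.scaleR_left)
    moreover have "(\<lambda>h. h * D2f (x t) u u) = (*) (D2f (x t) u u)" by (rule ext) (simp add: mult.commute)
    ultimately have "((\<lambda>t. Df (x t) u) has_real_derivative D2f (x t) u u) (at t)"
      by (simp add: has_field_derivative_def)
    then show ?thesis unfolding \<phi>'_def \<phi>''_def
      by (auto intro!: derivative_eq_intros simp: algebra_simps)
  qed
  have d2nn: "\<phi>'' t \<ge> 0" if "0 \<le> t" "t \<le> L" for t
    using hess_lb[OF xK[OF that], of u] by (simp add: \<phi>''_def n_def)
  have mono: "\<phi>' a \<le> \<phi>' b" if "0 \<le> a" "a \<le> b" "b \<le> L" for a b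
  proof (rule DERIV_nonneg_imp_nondecreasing[OF that(2), of \<phi>'])
    fix y assume y: "a \<le> y" "y \<le> b"
    then have "0 \<le> y" "y \<le> L" using that by linarith+
    then show "\<exists>z. (\<phi>' has_real_derivative z) (at y) \<and> 0 \<le> z"
      using d2 d2nn by blast
  qed
  have x1: "x 1 = v" by (simp add: x_def u_def)
  have xL: "x L = p" by (simp add: x_def pw)
  have neg1: "\<phi>' 1 < 0"
  proof (rule ccontr)
    assume "\<not> \<phi>' 1 < 0"
    have "\<phi> 1 \<le> \<phi> L"
    proof (rule DERIV_nonneg_imp_nondecreasing[of 1 L \<phi>])
      show "1 \<le> L" using Lpos by simp
      fix y assume y: "1 \<le> y" "y \<le> L"
      then have "0 \<le> y" by linarith
      then have "\<phi>' 1 \<le> \<phi>' y" using mono y by simp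
      then show "\<exists>z. (\<phi> has_real_derivative z) (at y) \<and> 0 \<le> z"
        using d1[OF \<open>0 \<le> y\<close> y(2)] \<open>\<not> \<phi>' 1 < 0\<close> by auto
    qed
    then show False using fv fp x1 xL by (simp add: \<phi>_def)
  qed
  show ?thesis
  proof (intro ballI impI)
    fix s t :: real assume st: "s \<in> {0..1}" "t \<in> {0..1}" "s < t"
    have "\<phi> t < \<phi> s"
    proof (rule DERIV_neg_imp_decreasing[OF st(3), of \<phi>])
      fix y assume y: "s \<le> y" "y \<le> t"
      then have y0: "0 \<le> y" "y \<le> 1" "y \<le> L" using st Lpos by auto
      then have "\<phi>' y \<le> \<phi>' 1" using mono Lpos by simp
      then show "\<exists>z. (\<phi> has_real_derivative z) (at y) \<and> z < 0"
        using d1[OF y0(1) y0(3)] neg1 by auto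
    qed
    then show "f0 f M (w + t *\<^sub>R (v - w)) < f0 f M (w + s *\<^sub>R (v - w))"
      by (simp add: \<phi>_def x_def u_def)
  qed
qed

end
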